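(* For every composition $I=(i_1,\dots,i_j)$ (positive integers, $j\ge1$): (a) $\eta_{1,1}(M_I)=\zeta(i_j+1,i_{j-1},\dots,i_1)$; (b) $\eta_{0,1,1}(M_I)=1$ if $I=(1)$; $\eta_{0,1,1}(M_I)=\eta_{0,1,1}(M_{(i_1,\dots,i_{j-1})})$ if $i_j=1$ and $j\ge2$; and $\eta_{0,1,1}(M_I)=\zeta(i_j,i_{j-1},\dots,i_1)-\eta_{0,1,1}(M_{(i_1,\dots,i_{j-1},i_j-1)})$ if $i_j\ge2$.
   Context: For a composition $I=(i_1,\dots,i_j)$ and $n\ge1$, let $M_I(n)=\sum_{1\le n_1<n_2<\cdots<n_j\le n}n_1^{-i_1}\cdots n_j^{-i_j}$ (this is the monomial quasi-symmetric function $M_I$ evaluated at $x_r=1/r$ for $r\le n$ and $x_r=0$ for $r>n$). For nonnegative integers $s_1,\dots,s_k$ with $s_1+\dots+s_k\ge2$, $\eta_{s_1,\dots,s_k}(M_I)=\sum_{n=1}^\infty\frac{M_I(n)}{n^{s_1}(n+1)^{s_2}\cdots(n+k-1)^{s_k}}$, extended linearly to quasi-symmetric functions. Multiple zeta values: for positive integers $a_1,\dots,a_k$ with $a_1\ge2$, $\zeta(a_1,\dots,a_k)=\sum_{n_1>\cdots>n_k\ge1}n_1^{-a_1}\cdots n_k^{-a_k}$. *)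

theory Defs
  imports "HOL-Analysis.Analysis"
begin

definition is_composition :: "nat list \<Rightarrow> bool" where
  "is_composition I \<longleftrightarrow> I \<noteq> [] \<and> (\<forall>i\<in>set I. i > 0)"

definition Mqs :: "nat list \<Rightarrow> nat \<Rightarrow> real" where
  "Mqs I n = (\<Sum>ns\<in>{ns. length ns = length I \<and> sorted_wrt (<) ns \<and> set ns \<subseteq> {1..n}}.
              \<Prod>k<length I. 1 / real (ns ! k) ^ (I ! k))"

definition eta :: "nat list \<Rightarrow> nat list \<Rightarrow> real" where
  "eta s I = (\<Sum>n. Mqs I (Suc n) / (\<Prod>k<length s. real (Suc n + k) ^ (s ! k)))"

definition mzeta :: "nat list \<Rightarrow> real" where
  "mzeta a = infsum (\<lambda>ns. \<Prod>k<length a. 1 / real (ns ! k) ^ (a ! k))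
              {ns. length ns = length a \<and> sorted_wrt (>) ns \<and> 0 \<notin> set ns}"

end

theory Submission
  imports Defs "HOL-Real_Asymp.Real_Asymp"
begin


definition W :: "nat list \<Rightarrow> nat list \<Rightarrow> real" where
  "W ns I = prod_list (map2 (\<lambda>n i. 1 / real n ^ i) ns I)"

definition SS :: "nat \<Rightarrow> nat \<Rightarrow> nat list set" where
  "SS L n = {ns. length ns = L \<and> sorted_wrt (<) ns \<and> set ns \<subseteq> {1..n}}"

lemma W_nth:
  assumes "length ns = length I"
  shows "(\<Prod>k<length I. 1 / real (ns ! k) ^ (I ! k)) = W ns I"
  unfolding W_def prod.list_conv_set_nth
  using assms by (intro prod.cong) auto

lemma W_nonneg: "W ns I \<ge> 0"
  unfolding W_def by (rule prod_list_nonneg) (auto elim!: in_set_zipE)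

lemma Mqs_eq: "Mqs I n = (\<Sum>ns\<in>SS (length I) n. W ns I)"
  unfolding Mqs_def SS_def by (intro sum.cong refl W_nth) auto

lemma Mqs_nonneg: "Mqs I n \<ge> 0"
  unfolding Mqs_eq by (intro sum_nonneg W_nonneg)

lemma finite_SS: "finite (SS L n)"
proof -
  have "SS L n \<subseteq> {xs. set xs \<subseteq> {1..n} \<and> length xs = L}" unfolding SS_def by auto
  then show ?thesis using finite_lists_length_eq[of "{1..n}" L] finite_subset by blast
qed

lemma SS_Nil: "SS 0 n = {[]}" unfolding SS_def by auto

lemma SS_Suc_0: "SS (Suc L) 0 = {}" unfolding SS_def by (auto simp: length_Suc_conv)

lemma SS_Suc: "SS (Suc L) (Suc n) = SS (Suc L) n \<union> (\<lambda>ks. ks @ [Suc n]) ` SS L n"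
proof
  show "SS (Suc L) (Suc n) \<subseteq> SS (Suc L) n \<union> (\<lambda>ks. ks @ [Suc n]) ` SS L n"
  proof
    fix ns assume ns: "ns \<in> SS (Suc L) (Suc n)"
    then have "ns \<noteq> []" unfolding SS_def by auto
    then obtain ks x where nsk: "ns = ks @ [x]" by (metis rev_exhaust)
    from ns nsk have len: "length ks = L" and sk: "sorted_wrt (<) ks" and lt: "\<forall>y\<in>set ks. y < x"
      and sub: "set ks \<subseteq> {1..Suc n}" and x: "x \<in> {1..Suc n}"
      unfolding SS_def by (auto simp: sorted_wrt_append)
    show "ns \<in> SS (Suc L) n \<union> (\<lambda>ks. ks @ [Suc n]) ` SS L n"
    proof (cases "x = Suc n")
      case True
      then have "ks \<in> SS L n" using len sk lt sub unfolding SS_def by force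
      then show ?thesis using nsk True by auto
    next
      case False
      then have "ns \<in> SS (Suc L) n" using ns nsk lt x unfolding SS_def by force
      then show ?thesis by auto
    qed
  qed
next
  show "SS (Suc L) n \<union> (\<lambda>ks. ks @ [Suc n]) ` SS L n \<subseteq> SS (Suc L) (Suc n)"
    unfolding SS_def by (force simp: sorted_wrt_append)
qed

lemma W_snoc: "length ks = length J \<Longrightarrow> W (ks @ [m]) (J @ [a]) = W ks J / real m ^ a"
  unfolding W_def by simp

lemma Mqs_Nil: "Mqs [] n = 1"
  unfolding Mqs_eq by (simp add: SS_Nil W_def)

lemma Mqs_snoc_0: "Mqs (J @ [a]) 0 = 0"
  unfolding Mqs_eq by (simp add: SS_Suc_0)

lemma Mqs_snoc_Suc: "Mqs (J @ [a]) (Suc n) = Mqs (J @ [a]) n + Mqs J n / real (Suc n) ^ a"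
proof -
  let ?L = "length J"
  have disj: "SS (Suc ?L) n \<inter> (\<lambda>ks. ks @ [Suc n]) ` SS ?L n = {}"
    unfolding SS_def by auto
  have inj: "inj_on (\<lambda>ks. ks @ [Suc n]) (SS ?L n)" by (auto intro: inj_onI)
  have "Mqs (J @ [a]) (Suc n) = (\<Sum>ns\<in>SS (Suc ?L) (Suc n). W ns (J @ [a]))"
    unfolding Mqs_eq by simp
  also have "\<dots> = (\<Sum>ns\<in>SS (Suc ?L) n. W ns (J @ [a])) + (\<Sum>ns\<in>(\<lambda>ks. ks @ [Suc n]) ` SS ?L n. W ns (J @ [a]))"
    unfolding SS_Suc by (rule sum.union_disjoint) (auto simp: finite_SS disj)
  also have "(\<Sum>ns\<in>(\<lambda>ks. ks @ [Suc n]) ` SS ?L n. W ns (J @ [a])) = (\<Sum>ks\<in>SS ?L n. W ks J / real (Suc n) ^ a)"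
    by (subst sum.reindex[OF inj]) (auto intro!: sum.cong simp: SS_def W_snoc simp del: of_nat_Suc)
  also have "\<dots> = Mqs J n / real (Suc n) ^ a"
    unfolding Mqs_eq by (simp add: sum_divide_distrib)
  finally show ?thesis unfolding Mqs_eq by simp
qed



lemma sum_inv_sqrt: "(\<Sum>m\<in>{1..n}. 1 / sqrt (real m)) \<le> 2 * sqrt (real n)"
proof (induction n)
  case 0 then show ?case by simp
next
  case (Suc n)
  have key: "1 / sqrt (real n + 1) \<le> 2 * sqrt (real n + 1) - 2 * sqrt (real n)"
  proof -
    have s: "sqrt (real n) * sqrt (real n + 1) \<le> real n + 1/2"
    proof -
      have "sqrt (real n) * sqrt (real n + 1) = sqrt (real n * (real n + 1))"
        by (simp add: real_sqrt_mult)
      also have "\<dots> \<le> sqrt ((real n + 1/2)^2)"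
        by (intro real_sqrt_le_mono) (simp add: power2_eq_square algebra_simps)
      also have "\<dots> = real n + 1/2" by simp
      finally show ?thesis .
    qed
    have pos: "sqrt (real n + 1) > 0" by simp
    have "1 \<le> 2 * (real n + 1) - 2 * (sqrt (real n) * sqrt (real n + 1))" using s mult_left_mono[of "sqrt (real n) * sqrt (real n + 1)" "real n + 1/2" 2] by simp
    also have "\<dots> = (2 * sqrt (real n + 1) - 2 * sqrt (real n)) * sqrt (real n + 1)"
      by (simp add: algebra_simps)
    finally show ?thesis using pos by (simp add: divide_simps mult.commute)
  qed
  have "(\<Sum>m\<in>{1..Suc n}. 1 / sqrt (real m)) = (\<Sum>m\<in>{1..n}. 1 / sqrt (real m)) + 1 / sqrt (real n + 1)"
    by (simp add: add.commute)
  also have "\<dots> \<le> 2 * sqrt (real (Suc n))" using Suc.IH key by (simp add: add.commute)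
  finally show ?case .
qed

lemma Mqs_bound:
  assumes "\<forall>i\<in>set J. i > 0"
  shows "Mqs J n \<le> 2 ^ length J * sqrt (real n + 1)"
  using assms
proof (induction J arbitrary: n rule: rev_induct)
  case Nil
  then show ?case by (simp add: Mqs_Nil)
next
  case (snoc a J)
  define K :: real where "K = 2 ^ length J"
  have a: "a \<ge> 1" using snoc.prems by auto
  have IH: "\<And>n. Mqs J n \<le> K * sqrt (real n + 1)" using snoc by (simp add: K_def)
  have K0: "K \<ge> 0" by (simp add: K_def)
  have step: "Mqs (J @ [a]) n \<le> K * (\<Sum>m\<in>{1..n}. 1 / sqrt (real m))" for n
  proof (induction n)
    case 0 then show ?case by (simp add: Mqs_snoc_0)
  next
    case (Suc n)
    have "Mqs J n / real (Suc n) ^ a \<le> Mqs J n / real (Suc n)"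
    proof (rule divide_left_mono)
      show "real (Suc n) \<le> real (Suc n) ^ a"
        using a by (metis One_nat_def Suc_le_eq le_add2 less_one not_less_eq_eq of_nat_1 of_nat_le_iff
            one_le_power plus_1_eq_Suc power_increasing power_one_right self_le_power)
    qed (auto simp: Mqs_nonneg)
    also have "\<dots> \<le> K * sqrt (real n + 1) / (real n + 1)"
      using IH[of n] by (simp add: divide_right_mono add.commute)
    also have "\<dots> = K * (1 / sqrt (real (Suc n)))"
      by (simp add: field_simps add.commute)
    finally have "Mqs (J @ [a]) (Suc n) \<le> K * (\<Sum>m\<in>{1..n}. 1 / sqrt (real m)) + K * (1 / sqrt (real (Suc n)))"
      using Suc.IH by (simp add: Mqs_snoc_Suc)
    also have "\<dots> = K * (\<Sum>m\<in>{1..Suc n}. 1 / sqrt (real m))"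
      by (simp add: distrib_left)
    finally show ?case .
  qed
  have "K * (\<Sum>m\<in>{1..n}. 1 / sqrt (real m)) \<le> K * (2 * sqrt (real n + 1))"
    using sum_inv_sqrt[of n] K0 by (intro mult_left_mono) (auto intro: order_trans)
  then have "Mqs (J @ [a]) n \<le> K * (2 * sqrt (real n + 1))" using step[of n] by linarith
  then show ?case by (simp add: K_def algebra_simps)
qed

lemma summable_sqrt_sq: "summable (\<lambda>n. sqrt (real n + 1) / (real n + 1)^2)"
proof -
  have "summable (\<lambda>n. real (Suc n) powr (-3/2))"
    using summable_real_powr_iff[of "-3/2"] summable_Suc_iff[of "\<lambda>n. real n powr (-3/2)"] by simp
  moreover have "sqrt (real n + 1) / (real n + 1)^2 = real (Suc n) powr (-3/2)" for n
  proof -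
    have p: "real n + 1 > 0" by simp
    have "real (Suc n) powr (-3/2) = (real n + 1) powr (1/2 - 2)"
      by (simp add: add.commute)
    also have "\<dots> = (real n + 1) powr (1/2) / (real n + 1) powr 2"
      by (rule powr_diff)
    also have "(real n + 1) powr 2 = (real n + 1) ^ 2"
      using p powr_realpow[of "real n + 1" 2] by simp
    also have "(real n + 1) powr (1/2) = sqrt (real n + 1)"
      using p by (simp add: powr_half_sqrt)
    finally show ?thesis by simp
  qed
  ultimately show ?thesis by simp
qed

lemma summable_bound:
  assumes "\<And>n. 0 \<le> x n" "\<And>n. x n \<le> K * (sqrt (real n + 1) / (real n + 1)^2)"
  shows "summable x"
proof (rule summable_comparison_test[of _ "\<lambda>n. K * (sqrt (real n + 1) / (real n + 1)^2)"])
  show "summable (\<lambda>n. K * (sqrt (real n + 1) / (real n + 1)^2))"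
    by (rule summable_mult[OF summable_sqrt_sq])
  show "\<exists>N. \<forall>n\<ge>N. norm (x n) \<le> K * (sqrt (real n + 1) / (real n + 1)^2)"
    using assms by auto
qed

lemma telescope_partial:
  fixes g :: "nat \<Rightarrow> real" and c :: real
  assumes "c \<ge> 0" "g 0 = 0"
  shows "(\<Sum>n<N. g (Suc n) / ((real n + 1 + c) * (real n + 2 + c)))
        = (\<Sum>n<N. (g (Suc n) - g n) / (real n + 1 + c)) - g N / (real N + 1 + c)"
proof (induction N)
  case 0 then show ?case using assms by simp
next
  case (Suc N)
  have p1: "real N + 1 + c > 0" and p2: "real N + 2 + c > 0" using assms by auto
  have e: "g (Suc N) / ((real N + 1 + c) * (real N + 2 + c))
     = (g (Suc N) - g N) / (real N + 1 + c) + g N / (real N + 1 + c) - g (Suc N) / (real N + 2 + c)"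
  proof -
    have "g (Suc N) / ((real N + 1 + c) * (real N + 2 + c)) = g (Suc N) * (1 / (real N + 1 + c) - 1 / (real N + 2 + c))"
      using p1 p2 by (simp add: field_simps)
    also have "\<dots> = (g (Suc N) - g N) / (real N + 1 + c) + g N / (real N + 1 + c) - g (Suc N) / (real N + 2 + c)"
      by (simp add: field_simps diff_divide_distrib)
    finally show ?thesis .
  qed
  have r: "real (Suc N) + 1 + c = real N + 2 + c" by simp
  define A where "A = (\<Sum>n<N. g (Suc n) / ((real n + 1 + c) * (real n + 2 + c)))"
  define B where "B = (\<Sum>n<N. (g (Suc n) - g n) / (real n + 1 + c))"
  have "(\<Sum>n<Suc N. g (Suc n) / ((real n + 1 + c) * (real n + 2 + c))) = A + g (Suc N) / ((real N + 1 + c) * (real N + 2 + c))"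
    unfolding A_def by simp
  also have "\<dots> = B - g N / (real N + 1 + c) + g (Suc N) / ((real N + 1 + c) * (real N + 2 + c))"
    using Suc.IH unfolding A_def B_def by simp
  also have "\<dots> = (B + (g (Suc N) - g N) / (real N + 1 + c)) - g (Suc N) / (real (Suc N) + 1 + c)"
    unfolding e r by simp
  also have "B + (g (Suc N) - g N) / (real N + 1 + c) = (\<Sum>n<Suc N. (g (Suc n) - g n) / (real n + 1 + c))"
    unfolding B_def by simp
  finally show ?case .
qed

lemma telescope_sums:
  fixes g :: "nat \<Rightarrow> real" and c :: real
  assumes "c \<ge> 0" "g 0 = 0"
    and "summable (\<lambda>n. (g (Suc n) - g n) / (real n + 1 + c))"
    and "(\<lambda>N. g N / (real N + 1 + c)) \<longlonglongrightarrow> 0"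
  shows "(\<lambda>n. g (Suc n) / ((real n + 1 + c) * (real n + 2 + c))) sums
           (\<Sum>n. (g (Suc n) - g n) / (real n + 1 + c))"
  unfolding sums_def telescope_partial[of c g, OF assms(1,2)]
  using tendsto_diff[OF summable_LIMSEQ[OF assms(3)] assms(4)] by simp



lemma W_rev: "length ks = length J \<Longrightarrow> W (rev ks) (rev J) = W ks J"
  unfolding W_def by (simp add: zip_rev rev_map[symmetric])

lemma div_bound:
  fixes x d K :: real
  assumes "0 \<le> x" "x \<le> K * sqrt (real n + 1)" "(real n + 1) ^ 2 \<le> d"
  shows "x / d \<le> K * (sqrt (real n + 1) / (real n + 1)^2)"
proof -
  have p: "(real n + 1) ^ 2 > 0" by simp
  have d: "d > 0" using assms(3) p by linarith
  have "x / d \<le> x / (real n + 1) ^ 2" using assms p d by (intro divide_left_mono) auto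
  also have "\<dots> \<le> K * sqrt (real n + 1) / (real n + 1) ^ 2" using assms p by (intro divide_right_mono) auto
  finally show ?thesis by simp
qed

lemma pow_ge: "a \<ge> 1 \<Longrightarrow> real (Suc n) ^ a \<ge> real n + 1"
  by (metis add.commute of_nat_Suc of_nat_le_iff one_le_power self_le_power Suc_le_eq
       le_add2 less_one not_less_eq_eq of_nat_1 of_nat_power One_nat_def less_le_trans zero_less_Suc
       power_one_right power_increasing)

lemma pow_ge2: "b \<ge> 2 \<Longrightarrow> real (Suc n) ^ b \<ge> (real n + 1) ^ 2"
proof -
  assume b: "b \<ge> 2"
  have "real (Suc n) ^ 2 \<le> real (Suc n) ^ b" by (rule power_increasing[OF b]) simp
  then show ?thesis by (simp add: add.commute)
qed

lemma img1: "length ks = L \<Longrightarrow> sorted_wrt (<) ks \<Longrightarrow> set ks \<subseteq> {1..n} \<Longrightarrow>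
   length (Suc n # rev ks) = Suc L \<and> sorted_wrt (>) (Suc n # rev ks) \<and> (0::nat) \<notin> set (Suc n # rev ks)"
  by (auto simp: sorted_wrt_rev)

lemma img2: "sorted_wrt (>) (m # ms) \<Longrightarrow> 0 \<notin> set (m # ms) \<Longrightarrow> m = Suc n \<Longrightarrow>
   sorted_wrt (<) (rev ms) \<and> set (rev ms) \<subseteq> {1..n}"
  apply (auto simp: sorted_wrt_rev Suc_le_eq less_Suc_eq_le)
  apply (metis gr0I)
  done

lemma mzeta_sums:
  assumes J: "\<forall>i\<in>set J. i > 0" and b: "b \<ge> 2"
  shows "(\<lambda>n. Mqs J n / real (Suc n) ^ b) sums mzeta (b # rev J)"
proof -
  define L where "L = length J"
  define c where "c n = Mqs J n / real (Suc n) ^ b" for n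
  have c_nn: "c n \<ge> 0" for n unfolding c_def by (simp add: Mqs_nonneg)
  have sc: "summable c"
  proof (rule summable_bound[where K = "2 ^ L"])
    fix n show "0 \<le> c n" by (rule c_nn)
    show "c n \<le> 2 ^ L * (sqrt (real n + 1) / (real n + 1)^2)"
      unfolding c_def L_def by (rule div_bound[OF Mqs_nonneg Mqs_bound[OF J] pow_ge2[OF b]])
  qed
  have hc: "(c has_sum suminf c) UNIV"
    by (rule sums_nonneg_imp_has_sum[OF summable_sums[OF sc] c_nn])
  define A :: "nat list set" where "A = {ns. length ns = length (b # rev J) \<and> sorted_wrt (>) ns \<and> 0 \<notin> set ns}"
  define f where "f ns = (\<Prod>k<length (b # rev J). 1 / real (ns ! k) ^ ((b # rev J) ! k))" for ns
  define h where "h p = Suc (fst p) # rev (snd p)" for p :: "nat \<times> nat list"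
  define X where "X = Sigma (UNIV :: nat set) (\<lambda>n. SS L n)"
  define F where "F p = W (snd p) J / real (Suc (fst p)) ^ b" for p :: "nat \<times> nat list"
  have bij: "bij_betw h X A"
    unfolding bij_betw_def
  proof
    show "inj_on h X" unfolding h_def by (auto intro!: inj_onI)
    show "h ` X = A"
    proof
      show "h ` X \<subseteq> A"
      proof
        fix y assume "y \<in> h ` X"
        then obtain n ks where y: "y = Suc n # rev ks" and ks: "ks \<in> SS L n"
          unfolding h_def X_def by auto
        then have "length ks = L" "sorted_wrt (<) ks" "set ks \<subseteq> {1..n}" unfolding SS_def by auto
        from img1[OF this] show "y \<in> A" unfolding A_def L_def y by simp
      qed
      show "A \<subseteq> h ` X"
      proof
        fix y assume y: "y \<in> A"
        then obtain m ms where yms: "y = m # ms" unfolding A_def by (cases y) auto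
        with y have m0: "m \<noteq> 0" unfolding A_def by auto
        then obtain n where mn: "m = Suc n" by (cases m) auto
        have yA: "length (m # ms) = Suc L" "sorted_wrt (>) (m # ms)" "0 \<notin> set (m # ms)"
          using y unfolding yms A_def L_def by auto
        have "rev ms \<in> SS L n"
          using img2[OF yA(2,3) mn] yA(1) unfolding SS_def by simp
        then have "(n, rev ms) \<in> X" unfolding X_def by auto
        moreover have "y = h (n, rev ms)" unfolding h_def yms mn by simp
        ultimately show "y \<in> h ` X" by blast
      qed
    qed
  qed
  have fh: "f (h p) = F p" if pX: "p \<in> X" for p
  proof -
    obtain n ks where p: "p = (n, ks)" and ks: "ks \<in> SS L n" using pX unfolding X_def by (cases p) auto
    have len: "length ks = length J" using ks unfolding SS_def L_def by auto
    have "f (h p) = W (Suc n # rev ks) (b # rev J)"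
      unfolding f_def h_def p fst_conv snd_conv by (rule W_nth) (simp add: len)
    also have "\<dots> = W (rev ks) (rev J) / real (Suc n) ^ b" by (simp add: W_def)
    also have "\<dots> = F p" unfolding F_def p by (simp add: W_rev len)
    finally show ?thesis .
  qed
  have piece: "((\<lambda>ks. F (n, ks)) has_sum c n) (SS L n)" for n
  proof (rule has_sum_finiteI[OF finite_SS])
    show "c n = (\<Sum>ks\<in>SS L n. F (n, ks))"
      unfolding c_def F_def Mqs_eq L_def by (simp add: sum_divide_distrib)
  qed
  have Fnn: "F p \<ge> 0" for p unfolding F_def by (simp add: W_nonneg)
  have "F summable_on X"
    unfolding X_def by (rule summable_on_SigmaI[OF piece has_sum_imp_summable[OF hc]]) (use Fnn in auto)
  then have "(F has_sum suminf c) X"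
    unfolding X_def by (intro has_sum_SigmaI[OF piece hc]) auto
  then have "((\<lambda>p. f (h p)) has_sum suminf c) X"
    by (rule has_sum_cong[THEN iffD2, rotated]) (simp add: fh)
  then have "(f has_sum suminf c) A" using has_sum_reindex_bij_betw[OF bij] by blast
  then have "mzeta (b # rev J) = suminf c"
  proof -
    have "mzeta (b # rev J) = infsum f A" unfolding mzeta_def A_def f_def[abs_def] by (rule refl)
    then show ?thesis using infsumI[OF \<open>(f has_sum suminf c) A\<close>] by simp
  qed
  then show ?thesis using summable_sums[OF sc] unfolding c_def by simp
qed



lemma eta11: "eta [1,1] I = (\<Sum>n. Mqs I (Suc n) / ((real n + 1 + 0) * (real n + 2 + 0)))"
  unfolding eta_def by (intro arg_cong[where f=suminf] ext) (simp add: numeral_2_eq_2 algebra_simps)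

lemma eta011: "eta [0,1,1] I = (\<Sum>n. Mqs I (Suc n) / ((real n + 1 + 1) * (real n + 2 + 1)))"
  unfolding eta_def by (intro arg_cong[where f=suminf] ext) (simp add: numeral_3_eq_3 algebra_simps)

lemma E_summable:
  assumes J: "\<forall>i\<in>set J. i > 0" and a: "a \<ge> 1" and c: "c \<ge> 0"
  shows "summable (\<lambda>n. Mqs J n / (real (Suc n) ^ a * (real n + 1 + c)))"
proof (rule summable_bound[where K = "2 ^ length J"])
  fix n
  show "0 \<le> Mqs J n / (real (Suc n) ^ a * (real n + 1 + c))" using c by (simp add: Mqs_nonneg)
  have "(real n + 1) ^ 2 \<le> real (Suc n) ^ a * (real n + 1 + c)"
  proof -
    have "(real n + 1) ^ 2 = (real n + 1) * (real n + 1)" by (simp add: power2_eq_square)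
    also have "\<dots> \<le> real (Suc n) ^ a * (real n + 1 + c)"
      using pow_ge[OF a, of n] c by (intro mult_mono) auto
    finally show ?thesis .
  qed
  then show "Mqs J n / (real (Suc n) ^ a * (real n + 1 + c)) \<le> 2 ^ length J * (sqrt (real n + 1) / (real n + 1)^2)"
    by (rule div_bound[OF Mqs_nonneg Mqs_bound[OF J]])
qed

lemma eta_sums:
  assumes J: "\<forall>i\<in>set J. i > 0" and a: "a \<ge> 1" and c: "c \<ge> 0"
  shows "(\<lambda>n. Mqs (J @ [a]) (Suc n) / ((real n + 1 + c) * (real n + 2 + c))) sums
          (\<Sum>n. Mqs J n / (real (Suc n) ^ a * (real n + 1 + c)))"
proof -
  let ?g = "Mqs (J @ [a])"
  have Ja: "\<forall>i\<in>set (J @ [a]). i > 0" using J a by auto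
  have d: "(?g (Suc n) - ?g n) / (real n + 1 + c) = Mqs J n / (real (Suc n) ^ a * (real n + 1 + c))" for n
    by (simp add: Mqs_snoc_Suc)
  have lim: "(\<lambda>N. ?g N / (real N + 1 + c)) \<longlonglongrightarrow> 0"
  proof (rule tendsto_sandwich[where f = "\<lambda>_. 0" and h = "\<lambda>N. 2 ^ length (J @ [a]) * (sqrt (real N + 1) / (real N + 1))"])
    show "\<forall>\<^sub>F N in sequentially. 0 \<le> ?g N / (real N + 1 + c)"
      using c by (auto simp: Mqs_nonneg)
    show "\<forall>\<^sub>F N in sequentially. ?g N / (real N + 1 + c) \<le> 2 ^ length (J @ [a]) * (sqrt (real N + 1) / (real N + 1))"
    proof (rule always_eventually, rule allI)
      fix N
      have "?g N / (real N + 1 + c) \<le> ?g N / (real N + 1)"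
        using c by (intro divide_left_mono) (auto simp: Mqs_nonneg)
      also have "\<dots> \<le> 2 ^ length (J @ [a]) * sqrt (real N + 1) / (real N + 1)"
        using Mqs_bound[OF Ja, of N] by (intro divide_right_mono) auto
      finally show "?g N / (real N + 1 + c) \<le> 2 ^ length (J @ [a]) * (sqrt (real N + 1) / (real N + 1))" by simp
    qed
    have "(\<lambda>N::nat. sqrt (real N + 1) / (real N + 1)) \<longlonglongrightarrow> 0" by real_asymp
    then show "(\<lambda>N. 2 ^ length (J @ [a]) * (sqrt (real N + 1) / (real N + 1))) \<longlonglongrightarrow> 0"
      by (rule tendsto_mult_right_zero)
  qed simp
  show ?thesis
    using telescope_sums[of c ?g, OF c Mqs_snoc_0 _ lim] E_summable[OF J a c] unfolding d by simp
qed

lemma sums_half: "(\<lambda>n. 1 / (real (Suc n) ^ 1 * (real n + 1 + 1))) sums 1"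
proof -
  have "(\<lambda>n. 1 / (real n + 1) - 1 / (real (Suc n) + 1)) sums (1 / (real 0 + 1) - 0)"
    by (rule telescope_sums'[of "\<lambda>n. 1 / (real n + 1)"]) real_asymp
  moreover have "1 / (real n + 1) - 1 / (real (Suc n) + 1) = 1 / (real (Suc n) ^ 1 * (real n + 1 + 1))" for n
    by (simp add: field_simps)
  ultimately show ?thesis by simp
qed



lemma frac_split: fixes M x p :: real assumes "x > 0" "p > 0" shows "M/((x*p)*(x+1)) = M/(x*p) - M/(p*(x+1))"
proof -
  have h: "x * p \<noteq> 0" "p * (x + 1) \<noteq> 0" "x*p*(x+1) \<noteq> 0" using assms by auto
  have "M/(x*p) - M/(p*(x+1)) = (M*(p*(x+1)) - M*(x*p)) / ((x*p)*(p*(x+1)))"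
    using h by (simp add: diff_frac_eq)
  also have "\<dots> = (M * p) / ((x*p*(x+1)) * p)" by (simp add: algebra_simps)
  also have "\<dots> = M/((x*p)*(x+1))" using assms by simp
  finally show ?thesis by simp
qed

theorem mainTheorem9:
  fixes I :: "nat list"
  assumes "is_composition I"
  shows "eta [1, 1] I = mzeta ((last I + 1) # tl (rev I))
     \<and> (I = [1] \<longrightarrow> eta [0, 1, 1] I = 1)
     \<and> (last I = 1 \<and> length I \<ge> 2 \<longrightarrow> eta [0, 1, 1] I = eta [0, 1, 1] (butlast I))
     \<and> (last I \<ge> 2 \<longrightarrow>
          eta [0, 1, 1] I = mzeta (rev I) - eta [0, 1, 1] (butlast I @ [last I - 1]))"
proof -
  from assms have ne: "I \<noteq> []" and pos: "\<forall>i\<in>set I. i > 0" unfolding is_composition_def by auto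
  then obtain J a where I: "I = J @ [a]" by (metis rev_exhaust)
  have J: "\<forall>i\<in>set J. i > 0" using pos I by auto
  have a: "a \<ge> 1" using pos I by auto
  have c0: "(0::real) \<ge> 0" and c1: "(1::real) \<ge> 0" by auto
  have E0: "eta [1,1] I = (\<Sum>n. Mqs J n / (real (Suc n) ^ a * (real n + 1 + 0)))"
    unfolding eta11 I using sums_unique[OF eta_sums[OF J a c0]] by simp
  have E1: "eta [0,1,1] (J @ [a']) = (\<Sum>n. Mqs J n / (real (Suc n) ^ a' * (real n + 1 + 1)))"
    if "a' \<ge> 1" for a'
    unfolding eta011 using sums_unique[OF eta_sums[OF J that c1]] by simp
  have partA: "eta [1, 1] I = mzeta ((last I + 1) # tl (rev I))"
  proof -
    have "(\<lambda>n. Mqs J n / real (Suc n) ^ (a + 1)) sums mzeta ((a + 1) # rev J)"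
      by (rule mzeta_sums[OF J]) (use a in auto)
    moreover have "(\<lambda>n. Mqs J n / (real (Suc n) ^ a * (real n + 1 + 0))) = (\<lambda>n. Mqs J n / real (Suc n) ^ (a + 1))"
      by (rule ext) (simp add: algebra_simps)
    ultimately have "eta [1,1] I = mzeta ((a + 1) # rev J)" using E0 by (simp add: sums_iff)
    then show ?thesis using I by simp
  qed
  have partB1: "I = [1] \<longrightarrow> eta [0, 1, 1] I = 1"
  proof
    assume "I = [1]"
    then have "J = []" "a = 1" using I by auto
    then show "eta [0, 1, 1] I = 1"
      using E1[of 1] sums_unique[OF sums_half] I by (simp add: Mqs_Nil)
  qed
  have partB2: "last I = 1 \<and> length I \<ge> 2 \<longrightarrow> eta [0, 1, 1] I = eta [0, 1, 1] (butlast I)"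
  proof
    assume h: "last I = 1 \<and> length I \<ge> 2"
    then have a1: "a = 1" and Jne: "J \<noteq> []" using I by auto
    then obtain J' x where J': "J = J' @ [x]" by (metis rev_exhaust)
    define u where "u n = Mqs J n / (real (Suc n) ^ 1 * (real n + 1 + 1))" for n
    have su: "summable u" unfolding u_def by (rule E_summable[OF J]) auto
    have u0: "u 0 = 0" unfolding u_def J' by (simp add: Mqs_snoc_0)
    have ue: "(\<lambda>n. Mqs J n / (real (Suc n) ^ 1 * (real n + 1 + 1))) = u" by (rule ext) (simp add: u_def)
    have "eta [0,1,1] I = suminf u" using E1[of 1, unfolded ue] I a1 by simp
    also have "\<dots> = (\<Sum>n. u (Suc n))" using suminf_split_head[OF su] u0 by simp
    also have "\<dots> = eta [0,1,1] J"
      unfolding eta011 u_def by (intro arg_cong[where f=suminf] ext) (simp add: algebra_simps)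
    finally show "eta [0, 1, 1] I = eta [0, 1, 1] (butlast I)" using I by simp
  qed
  have partB3: "last I \<ge> 2 \<longrightarrow>
          eta [0, 1, 1] I = mzeta (rev I) - eta [0, 1, 1] (butlast I @ [last I - 1])"
  proof
    assume "last I \<ge> 2"
    then have a2: "a \<ge> 2" using I by simp
    then obtain a' where aa: "a = Suc a'" and a': "a' \<ge> 1" by (cases a) auto
    have z: "(\<lambda>n. Mqs J n / real (Suc n) ^ a) sums mzeta (a # rev J)"
      by (rule mzeta_sums[OF J a2])
    have s2: "summable (\<lambda>n. Mqs J n / (real (Suc n) ^ a' * (real n + 1 + 1)))"
      by (rule E_summable[OF J a']) simp
    have id: "Mqs J n / (real (Suc n) ^ a * (real n + 1 + 1)) =
        Mqs J n / real (Suc n) ^ a - Mqs J n / (real (Suc n) ^ a' * (real n + 1 + 1))" for n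
    proof -
      have r: "real n + 1 + 1 = real (Suc n) + 1" by simp
      show ?thesis unfolding aa power_Suc r
        by (rule frac_split) auto
    qed
    have "eta [0,1,1] I = (\<Sum>n. Mqs J n / (real (Suc n) ^ a * (real n + 1 + 1)))"
      using E1[OF a] I by simp
    also have "\<dots> = (\<Sum>n. Mqs J n / real (Suc n) ^ a) - (\<Sum>n. Mqs J n / (real (Suc n) ^ a' * (real n + 1 + 1)))"
      unfolding id by (rule suminf_diff[OF sums_summable[OF z] s2, symmetric])
    also have "\<dots> = mzeta (rev I) - eta [0,1,1] (butlast I @ [last I - 1])"
      using sums_unique[OF z] E1[OF a'] I aa by simp
    finally show "eta [0, 1, 1] I = mzeta (rev I) - eta [0, 1, 1] (butlast I @ [last I - 1])" .
  qed
  show ?thesis using partA partB1 partB2 partB3 by blast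
qed

end
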